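(* Let $W \subseteq \mathbb{Z}$. Then $W$ is a minimal additive complement to itself if and only if $W + W = \mathbb{Z}$ and $W$ contains no 3-term arithmetic progression.
   Context: For $X, Y \subseteq \mathbb{Z}$, $X + Y = \{x + y : x \in X, y \in Y\}$. A set $C \subseteq \mathbb{Z}$ is an additive complement to $W \subseteq \mathbb{Z}$ if $C + W = \mathbb{Z}$; it is a minimal additive complement to $W$ if moreover no proper subset of $C$ is an additive complement to $W$. A 3-term arithmetic progression in $W$ is a triple $w - d, w, w + d$ of elements of $W$ with $d \neq 0$. *)

theory Defs
  imports Main
begin

definition sumset :: "int set \<Rightarrow> int set \<Rightarrow> int set" where
  "sumset X Y = {x + y | x y. x \<in> X \<and> y \<in> Y}"

definition add_complement :: "int set \<Rightarrow> int set \<Rightarrow> bool" where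
  "add_complement C W \<longleftrightarrow> sumset C W = UNIV"

definition minimal_add_complement :: "int set \<Rightarrow> int set \<Rightarrow> bool" where
  "minimal_add_complement C W \<longleftrightarrow>
     add_complement C W \<and> (\<forall>C'. C' \<subset> C \<longrightarrow> \<not> add_complement C' W)"

definition has_3AP :: "int set \<Rightarrow> bool" where
  "has_3AP W \<longleftrightarrow> (\<exists>w d. d \<noteq> 0 \<and> w - d \<in> W \<and> w \<in> W \<and> w + d \<in> W)"

end

theory Submission
  imports Defs
begin

theorem theorem10:
  fixes W :: "int set"
  shows "minimal_add_complement W W \<longleftrightarrow> (sumset W W = UNIV \<and> \<not> has_3AP W)"
proof
  assume m: "minimal_add_complement W W"
  hence s: "sumset W W = UNIV" by (simp add: minimal_add_complement_def add_complement_def)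
  have "\<not> has_3AP W"
  proof
    assume "has_3AP W"
    then obtain w d where d: "d \<noteq> 0" "w - d \<in> W" "w \<in> W" "w + d \<in> W"
      unfolding has_3AP_def by blast
    have sub: "W - {w} \<subset> W" using d by blast
    have "sumset (W - {w}) W = UNIV"
    proof (rule set_eqI, rule iffI)
      fix n :: int
      have "n \<in> sumset W W" using s by simp
      then obtain a b where ab: "n = a + b" "a \<in> W" "b \<in> W" unfolding sumset_def by blast
      show "n \<in> sumset (W - {w}) W"
      proof (cases "a = w")
        case False thus ?thesis using ab unfolding sumset_def by blast
      next
        case True
        show ?thesis
        proof (cases "b = w")
          case False thus ?thesis using ab True d unfolding sumset_def
            by (intro CollectI exI[of _ b] exI[of _ a]) auto
        next
          case b: True
          have "n = (w - d) + (w + d)" using ab True b by simp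
          thus ?thesis using d unfolding sumset_def
            by (intro CollectI exI[of _ "w - d"] exI[of _ "w + d"]) auto
        qed
      qed
    qed simp
    thus False using m sub unfolding minimal_add_complement_def add_complement_def by blast
  qed
  with s show "sumset W W = UNIV \<and> \<not> has_3AP W" by simp
next
  assume h: "sumset W W = UNIV \<and> \<not> has_3AP W"
  have "\<not> add_complement C' W" if C': "C' \<subset> W" for C'
  proof
    assume "add_complement C' W"
    hence "2 * w \<in> sumset C' W" for w by (simp add: add_complement_def)
    obtain w where w: "w \<in> W" "w \<notin> C'" using C' by blast
    obtain c v where cv: "2 * w = c + v" "c \<in> C'" "v \<in> W"
      using \<open>\<And>w. 2 * w \<in> sumset C' W\<close>[of w] unfolding sumset_def by blast
    have "c \<noteq> w" using cv w by blast
    hence "has_3AP W" unfolding has_3AP_def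
      using cv w C' by (intro exI[of _ w] exI[of _ "c - w"]) auto
    thus False using h by simp
  qed
  thus "minimal_add_complement W W" using h
    by (simp add: minimal_add_complement_def add_complement_def)
qed

end
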